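(* Let $n\ge2$, $k\in\{1,\dots,n\}$ and let $W_1,\dots,W_n$ be the Pauli strings on $n-1$ qubits defined in the context. For $1\le m<k$ let $G_m=iW_{m+1}W_m$, and for $k\le m<n$ let $G_m=iW_mW_{m+1}$; for any real $\theta$ let $R_m=\exp(-i\theta G_m/2)$. Then for $1\le m<k$ we have $R_mW_jR_m^\dagger=W_j$ for every $j$ with $m+1<j\le n$; and for $k\le m<n$ we have $R_mW_jR_m^\dagger=W_j$ for every $j$ with $1\le j<k$.
   Context: $X_j,Y_j,Z_j$ are Pauli operators on qubit $j$ of an $(n-1)$-qubit system; empty products of $Z$'s are the identity. For $k\ne n$: for $1\le j<k$, $W_j=Y_jZ_{j+1}\cdots Z_{k-1}Y_k$; $W_k=Z_k$; for $k<j<n$, $W_j=X_kZ_{k+1}\cdots Z_{j-1}X_j$; and $W_n=X_kZ_{k+1}\cdots Z_{n-1}$. For $k=n$: for $1\le j<n$, $W_j=-Z_1Z_2\cdots Z_{j-1}X_j$; $W_n=\prod_{j=1}^{n-1}Z_j$. *)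

theory Defs
  imports Complex_Main "Jordan_Normal_Form.Matrix"
begin

(* Operators on N qubits are 2^N x 2^N complex matrices; qubit 1 is the leftmost tensor factor. *)

definition kron :: "complex mat \<Rightarrow> complex mat \<Rightarrow> complex mat" where
  "kron A B = mat (dim_row A * dim_row B) (dim_col A * dim_col B)
     (\<lambda>(i,j). A $$ (i div dim_row B, j div dim_col B) * B $$ (i mod dim_row B, j mod dim_col B))"

definition pauliX :: "complex mat" where
  "pauliX = mat_of_rows_list 2 [[0, 1], [1, 0]]"
definition pauliY :: "complex mat" where
  "pauliY = mat_of_rows_list 2 [[0, -\<i>], [\<i>, 0]]"
definition pauliZ :: "complex mat" where
  "pauliZ = mat_of_rows_list 2 [[1, 0], [0, -1]]"

definition op_at :: "nat \<Rightarrow> nat \<Rightarrow> complex mat \<Rightarrow> complex mat" where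
  "op_at N j A = kron (kron (1\<^sub>m (2 ^ (j - 1))) A) (1\<^sub>m (2 ^ (N - j)))"

definition Xq :: "nat \<Rightarrow> nat \<Rightarrow> complex mat" where "Xq N j = op_at N j pauliX"
definition Yq :: "nat \<Rightarrow> nat \<Rightarrow> complex mat" where "Yq N j = op_at N j pauliY"
definition Zq :: "nat \<Rightarrow> nat \<Rightarrow> complex mat" where "Zq N j = op_at N j pauliZ"

definition Zprod :: "nat \<Rightarrow> nat \<Rightarrow> nat \<Rightarrow> complex mat" where
  "Zprod N a b = foldr (\<lambda>j M. Zq N j * M) [a..<b] (1\<^sub>m (2 ^ N))"

definition W :: "nat \<Rightarrow> nat \<Rightarrow> nat \<Rightarrow> complex mat" where
  "W n k j = (let N = n - 1 in
     if k \<noteq> n then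
       (if j < k then Yq N j * Zprod N (j + 1) k * Yq N k
        else if j = k then Zq N k
        else if j < n then Xq N k * Zprod N (k + 1) j * Xq N j
        else Xq N k * Zprod N (k + 1) n)
     else
       (if j < n then - (Zprod N 1 j * Xq N j)
        else Zprod N 1 n))"

definition mexp :: "complex mat \<Rightarrow> complex mat" where
  "mexp A = mat (dim_row A) (dim_col A) (\<lambda>(i,j). \<Sum>t. (A ^\<^sub>m t) $$ (i,j) / of_nat (fact t))"

definition dagger :: "complex mat \<Rightarrow> complex mat" where
  "dagger A = mat (dim_col A) (dim_row A) (\<lambda>(i,j). cnj (A $$ (j,i)))"

definition Gen :: "nat \<Rightarrow> nat \<Rightarrow> nat \<Rightarrow> complex mat" where
  "Gen n k m = (if m < k then \<i> \<cdot>\<^sub>m (W n k (m + 1) * W n k m)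
                else \<i> \<cdot>\<^sub>m (W n k m * W n k (m + 1)))"

definition Rot :: "nat \<Rightarrow> nat \<Rightarrow> real \<Rightarrow> nat \<Rightarrow> complex mat" where
  "Rot n k \<theta> m = mexp ((- \<i> * complex_of_real \<theta> / 2) \<cdot>\<^sub>m Gen n k m)"

end

theory Submission
  imports Defs
begin

lemma sum_divmod: "(\<Sum>l<b*d. g (l div d) (l mod (d::nat))) = (\<Sum>x<b. \<Sum>y<d. g x y)"
proof -
  have "(\<Sum>l<b*d. g (l div d) (l mod (d::nat))) = (\<Sum>x<b. \<Sum>l\<in>{x*d..<x*d+d}. g (l div d) (l mod d))"
    using sum.nat_group[of "\<lambda>l. g (l div d) (l mod d)" d b] by simp
  also have "\<dots> = (\<Sum>x<b. \<Sum>y<d. g x y)"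
  proof (rule sum.cong[OF refl])
    fix x assume "x \<in> {..<b}"
    have e: "{x*d..<x*d+d} = (\<lambda>y. x*d+y) ` {..<d}"
      apply (auto simp: image_iff)
      subgoal for l by (rule bexI[of _ "l - x*d"]) auto
      done
    have "(\<Sum>l\<in>{x*d..<x*d+d}. g (l div d) (l mod d)) = (\<Sum>y<d. g ((x*d+y) div d) ((x*d+y) mod d))"
      unfolding e by (subst sum.reindex, auto simp: inj_on_def)
    also have "\<dots> = (\<Sum>y<d. g x y)" by (rule sum.cong, auto)
    finally show "(\<Sum>l\<in>{x*d..<x*d+d}. g (l div d) (l mod d)) = (\<Sum>y<d. g x y)" .
  qed
  finally show ?thesis .
qed

lemma kron_carrier[simp]: "kron A B \<in> carrier_mat (dim_row A * dim_row B) (dim_col A * dim_col B)"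
  unfolding kron_def by auto
lemma kron_dim[simp]: "dim_row (kron A B) = dim_row A * dim_row B" "dim_col (kron A B) = dim_col A * dim_col B"
  unfolding kron_def by auto
lemma kron_index: "i < dim_row A * dim_row B \<Longrightarrow> j < dim_col A * dim_col B \<Longrightarrow>
  kron A B $$ (i,j) = A $$ (i div dim_row B, j div dim_col B) * B $$ (i mod dim_row B, j mod dim_col B)"
  unfolding kron_def by auto

lemma lt_mult_mod: "(i::nat) < a * c \<Longrightarrow> i mod c < c"
  by (cases "c = 0") auto
lemma lt_mult_div: "(i::nat) < a * c \<Longrightarrow> i div c < a"
  by (simp add: less_mult_imp_div_less)

lemma kron_mult:
  assumes A: "A \<in> carrier_mat a b" and B: "B \<in> carrier_mat c d"
    and C: "C \<in> carrier_mat b e" and D: "D \<in> carrier_mat d f"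
  shows "kron A B * kron C D = kron (A * C) (B * D)"
proof (rule eq_matI)
  fix i j assume i: "i < dim_row (kron (A * C) (B * D))" and j: "j < dim_col (kron (A * C) (B * D))"
  hence i': "i < a * c" and j': "j < e * f" using A B C D by auto
  have "(kron A B * kron C D) $$ (i, j) = (\<Sum>l<b*d. A $$ (i div c, l div d) * B $$ (i mod c, l mod d) *
      (C $$ (l div d, j div f) * D $$ (l mod d, j mod f)))"
    using A B C D i' j' 
    by (auto simp: scalar_prod_def kron_index lessThan_atLeast0 lt_mult_div lt_mult_mod intro!: sum.cong)
  also have "\<dots> = (\<Sum>x<b. \<Sum>y<d. A $$ (i div c, x) * B $$ (i mod c, y) *
      (C $$ (x, j div f) * D $$ (y, j mod f)))"
    by (rule sum_divmod[where g = "\<lambda>x y. A $$ (i div c, x) * B $$ (i mod c, y) *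
      (C $$ (x, j div f) * D $$ (y, j mod f))"])
  also have "\<dots> = (\<Sum>x<b. A $$ (i div c, x) * C $$ (x, j div f)) * (\<Sum>y<d. B $$ (i mod c, y) * D $$ (y, j mod f))"
    by (simp add: sum_product ac_simps)
  also have "\<dots> = kron (A * C) (B * D) $$ (i, j)"
    using A B C D i' j'
    by (auto simp: scalar_prod_def kron_index lessThan_atLeast0 lt_mult_div lt_mult_mod)
  finally show "(kron A B * kron C D) $$ (i, j) = kron (A * C) (B * D) $$ (i, j)" .
qed (use A B C D in auto)

lemma divmod_aux: "0 < (c::nat) \<Longrightarrow> i mod (b*c) div c = i div c mod b"
proof -
  assume c: "0 < c"
  have "i mod (b*c) = c * (i div c mod b) + i mod c" by (simp add: mod_mult2_eq mult.commute[of b c])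
  thus ?thesis using c by simp
qed
lemma divmod_aux2: "i mod (b*c) mod c = (i::nat) mod c"
  by (simp add: mod_mod_cancel)

lemma div_div_comm: "(i::nat) div c div b = i div b div c"
  by (metis div_mult2_eq mult.commute)

lemma kron_assoc: "kron (kron A B) C = kron A (kron B C)"
proof (rule eq_matI)
  fix i j assume i: "i < dim_row (kron A (kron B C))" and j: "j < dim_col (kron A (kron B C))"
  let ?rb = "dim_row B" and ?rc = "dim_row C" and ?cb = "dim_col B" and ?cc = "dim_col C"
  have i': "i < dim_row A * ?rb * ?rc" and j': "j < dim_col A * ?cb * ?cc" using i j by (auto simp: ac_simps)
  have p: "0 < ?rc" "0 < ?cc" "0 < ?rb" "0 < ?cb" using i' j' by (auto intro!: Nat.gr0I)
  have "kron (kron A B) C $$ (i, j) = A $$ (i div ?rc div ?rb, j div ?cc div ?cb) * B $$ (i div ?rc mod ?rb, j div ?cc mod ?cb)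
     * C $$ (i mod ?rc, j mod ?cc)"
    using i' j' by (simp add: kron_index lt_mult_div lt_mult_mod)
  also have "\<dots> = kron A (kron B C) $$ (i, j)"
    using i' j' p
    by (simp add: kron_index lt_mult_div lt_mult_mod div_mult2_eq divmod_aux divmod_aux2 mult.assoc div_div_comm[of i ?rc] div_div_comm[of j ?cc]
      mod_less_divisor)
  finally show "kron (kron A B) C $$ (i, j) = kron A (kron B C) $$ (i, j)" .
qed auto

lemma kron_one: "kron (1\<^sub>m a) (1\<^sub>m b) = 1\<^sub>m (a * b)"
proof (rule eq_matI)
  fix i j assume i: "i < dim_row (1\<^sub>m (a * b))" and j: "j < dim_col (1\<^sub>m (a * b))"
  hence "i < a*b" "j < a*b" by auto
  moreover have "(i div b = j div b \<and> i mod b = j mod b) = (i = j)"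
    by (metis div_mult_mod_eq)
  ultimately show "kron (1\<^sub>m a) (1\<^sub>m b) $$ (i, j) = 1\<^sub>m (a * b) $$ (i, j)"
    by (auto simp: kron_index lt_mult_div lt_mult_mod)
qed auto

lemma kron_smult_left: "kron (x \<cdot>\<^sub>m A) B = x \<cdot>\<^sub>m kron A B"
  by (rule eq_matI, auto simp: kron_index lt_mult_div lt_mult_mod)
lemma kron_smult_right: "kron A (x \<cdot>\<^sub>m B) = x \<cdot>\<^sub>m kron A B"
  by (rule eq_matI, auto simp: kron_index lt_mult_div lt_mult_mod)

lemma dagger_kron: "dagger (kron A B) = kron (dagger A) (dagger B)"
  by (rule eq_matI, auto simp: dagger_def kron_index lt_mult_div lt_mult_mod)

lemma smult_smult_mat: "a \<cdot>\<^sub>m (b \<cdot>\<^sub>m A) = (a * b :: complex) \<cdot>\<^sub>m A"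
  by (rule eq_matI) auto
lemma one_smult_mat': "(1::complex) \<cdot>\<^sub>m A = A"
  by (rule eq_matI) auto

fun tensor :: "nat \<Rightarrow> (nat \<Rightarrow> complex mat) \<Rightarrow> complex mat" where
  "tensor 0 f = 1\<^sub>m 1"
| "tensor (Suc N) f = kron (tensor N f) (f (Suc N))"

lemma tensor_carrier: "(\<And>q. 1 \<le> q \<Longrightarrow> q \<le> N \<Longrightarrow> f q \<in> carrier_mat 2 2) \<Longrightarrow> tensor N f \<in> carrier_mat (2^N) (2^N)"
proof (induction N)
  case 0 thus ?case by simp
next
  case (Suc N)
  hence "tensor N f \<in> carrier_mat (2^N) (2^N)" "f (Suc N) \<in> carrier_mat 2 2" by auto
  thus ?case using kron_carrier[of "tensor N f" "f (Suc N)"] by auto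
qed

lemma tensor_cong: "(\<And>q. 1 \<le> q \<Longrightarrow> q \<le> N \<Longrightarrow> f q = g q) \<Longrightarrow> tensor N f = tensor N g"
  by (induction N) auto

lemma tensor_mult: "(\<And>q. 1 \<le> q \<Longrightarrow> q \<le> N \<Longrightarrow> f q \<in> carrier_mat 2 2) \<Longrightarrow>
   (\<And>q. 1 \<le> q \<Longrightarrow> q \<le> N \<Longrightarrow> g q \<in> carrier_mat 2 2) \<Longrightarrow>
   tensor N f * tensor N g = tensor N (\<lambda>q. f q * g q)"
proof (induction N)
  case 0 thus ?case by simp
next
  case (Suc N)
  have a: "tensor N f \<in> carrier_mat (2^N) (2^N)" "tensor N g \<in> carrier_mat (2^N) (2^N)"
    using Suc.prems by (auto intro!: tensor_carrier)
  have b: "f (Suc N) \<in> carrier_mat 2 2" "g (Suc N) \<in> carrier_mat 2 2" using Suc.prems by auto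
  have "tensor (Suc N) f * tensor (Suc N) g = kron (tensor N f * tensor N g) (f (Suc N) * g (Suc N))"
    by (simp add: kron_mult[OF a(1) b(1) a(2) b(2)])
  also have "tensor N f * tensor N g = tensor N (\<lambda>q. f q * g q)" using Suc by auto
  finally show ?case by simp
qed

lemma tensor_one: "tensor N (\<lambda>_. 1\<^sub>m 2) = 1\<^sub>m (2^N)"
  by (induction N) (auto simp: kron_one)

lemma tensor_smult: "tensor N (\<lambda>q. c q \<cdot>\<^sub>m f q) = (\<Prod>q\<in>{1..N}. c q) \<cdot>\<^sub>m tensor N f"
  by (induction N) (auto simp: kron_smult_left kron_smult_right smult_smult_mat one_smult_mat' prod.nat_ivl_Suc' mult.commute)

lemma tensor_dagger: "dagger (tensor N f) = tensor N (\<lambda>q. dagger (f q))"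
proof (induction N)
  case 0 show ?case by (rule eq_matI) (auto simp: dagger_def)
next
  case (Suc N) thus ?case by (simp add: dagger_kron)
qed

lemma tensor_delta_low: "tensor N (\<lambda>q. if q = j then A else 1\<^sub>m 2) = 1\<^sub>m (2^N)" if "N < j"
  using that
proof (induction N)
  case 0 thus ?case by simp
next
  case (Suc N) thus ?case by (simp add: kron_one mult.commute)
qed

lemma op_at_tensor:
  assumes "1 \<le> j" "j \<le> N"
  shows "op_at N j A = tensor N (\<lambda>q. if q = j then A else 1\<^sub>m 2)"
  using assms
proof (induction N)
  case 0 thus ?case by simp
next
  case (Suc N)
  show ?case
  proof (cases "j = Suc N")
    case True
    have "tensor (Suc N) (\<lambda>q. if q = j then A else 1\<^sub>m 2) = kron (1\<^sub>m (2^N)) A"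
      using True by (simp add: tensor_delta_low)
    moreover have "op_at (Suc N) j A = kron (kron (1\<^sub>m (2^N)) A) (1\<^sub>m 1)"
      using True by (simp add: op_at_def)
    moreover have "kron B (1\<^sub>m 1) = B" for B :: "complex mat"
      by (rule eq_matI) (auto simp: kron_index)
    ultimately show ?thesis by simp
  next
    case False
    hence j: "j \<le> N" using Suc.prems by simp
    have "tensor (Suc N) (\<lambda>q. if q = j then A else 1\<^sub>m 2) = kron (op_at N j A) (1\<^sub>m 2)"
      using Suc j False by simp
    also have "\<dots> = kron (kron (1\<^sub>m (2 ^ (j - 1))) A) (kron (1\<^sub>m (2 ^ (N - j))) (1\<^sub>m 2))"
      unfolding op_at_def by (simp add: kron_assoc)
    also have "\<dots> = op_at (Suc N) j A"
      unfolding op_at_def kron_one using j by (simp add: Suc_diff_le mult.commute)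
    finally show ?thesis by simp
  qed
qed

datatype pl = PI | PX | PY | PZ

fun pm :: "pl \<Rightarrow> complex mat" where
  "pm PI = 1\<^sub>m 2" | "pm PX = pauliX" | "pm PY = pauliY" | "pm PZ = pauliZ"

definition sg :: "pl \<Rightarrow> pl \<Rightarrow> complex" where
  "sg a b = (if a = PI \<or> b = PI \<or> a = b then 1 else -1)"

lemma two_cases: "(i::nat) < 2 \<Longrightarrow> i = 0 \<or> i = 1" by auto

lemma sum2: "(\<Sum>i\<in>{0..<2::nat}. f i) = f 0 + f 1"
  by (simp add: numeral_2_eq_2)

lemma pm_carrier[simp]: "pm a \<in> carrier_mat 2 2"
  by (cases a) (auto simp: pauliX_def pauliY_def pauliZ_def mat_of_rows_list_def)

lemma pm_dims[simp]: "dim_row (pm a) = 2" "dim_col (pm a) = 2"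
  using carrier_matD[OF pm_carrier[of a]] by auto

lemmas pdefs = pauliX_def pauliY_def pauliZ_def mat_of_rows_list_def

lemma pm_sq: "pm a * pm a = 1\<^sub>m 2"
  by (cases a; rule eq_matI; auto simp: pdefs scalar_prod_def sum2 dest!: two_cases)

lemma pm_I_right: "pm a * pm PI = pm a"
  using right_mult_one_mat[OF pm_carrier[of a]] by simp
lemma pm_I_left: "pm PI * pm a = pm a"
  using left_mult_one_mat[OF pm_carrier[of a]] by simp

lemma pm_comm: "pm a * pm b = sg a b \<cdot>\<^sub>m (pm b * pm a)"
  by (cases a; cases b; rule eq_matI; auto simp: sg_def pdefs scalar_prod_def sum2 numeral_2_eq_2 less_Suc_eq)

lemma pm_dagger: "dagger (pm a) = pm a"
  by (cases a; rule eq_matI; auto simp: dagger_def pdefs numeral_2_eq_2 less_Suc_eq)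

lemma tensor_pm_carrier[simp]: "tensor N (\<lambda>q. pm (F q)) \<in> carrier_mat (2^N) (2^N)"
  by (rule tensor_carrier) simp

lemma tensor_pm_comm: "tensor N (\<lambda>q. pm (F q)) * tensor N (\<lambda>q. pm (G q)) =
   (\<Prod>q\<in>{1..N}. sg (F q) (G q)) \<cdot>\<^sub>m (tensor N (\<lambda>q. pm (G q)) * tensor N (\<lambda>q. pm (F q)))"
proof -
  have "tensor N (\<lambda>q. pm (F q)) * tensor N (\<lambda>q. pm (G q)) = tensor N (\<lambda>q. pm (F q) * pm (G q))"
    by (rule tensor_mult) auto
  also have "\<dots> = tensor N (\<lambda>q. sg (F q) (G q) \<cdot>\<^sub>m (pm (G q) * pm (F q)))"
    by (intro tensor_cong) (rule pm_comm)
  also have "\<dots> = (\<Prod>q\<in>{1..N}. sg (F q) (G q)) \<cdot>\<^sub>m tensor N (\<lambda>q. pm (G q) * pm (F q))"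
    by (rule tensor_smult)
  also have "tensor N (\<lambda>q. pm (G q) * pm (F q)) = tensor N (\<lambda>q. pm (G q)) * tensor N (\<lambda>q. pm (F q))"
    by (rule tensor_mult[symmetric]) auto
  finally show ?thesis .
qed

lemma tensor_pm_sq: "tensor N (\<lambda>q. pm (F q)) * tensor N (\<lambda>q. pm (F q)) = 1\<^sub>m (2^N)"
proof -
  have "tensor N (\<lambda>q. pm (F q)) * tensor N (\<lambda>q. pm (F q)) = tensor N (\<lambda>q. pm (F q) * pm (F q))"
    by (rule tensor_mult) auto
  also have "\<dots> = 1\<^sub>m (2^N)" by (simp add: pm_sq tensor_one)
  finally show ?thesis .
qed

lemma tensor_pm_dagger: "dagger (tensor N (\<lambda>q. pm (F q))) = tensor N (\<lambda>q. pm (F q))"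
  by (simp add: tensor_dagger pm_dagger)

lemma op_at_pm: "1 \<le> j \<Longrightarrow> j \<le> N \<Longrightarrow> op_at N j (pm a) = tensor N (\<lambda>q. pm (if q = j then a else PI))"
  by (subst op_at_tensor) (auto intro!: tensor_cong)

lemma Zprod_tensor: "1 \<le> a \<Longrightarrow> b \<le> Suc N \<Longrightarrow> Zprod N a b = tensor N (\<lambda>q. pm (if a \<le> q \<and> q < b then PZ else PI))"
proof (induction "b - a" arbitrary: a)
  case 0
  hence e: "[a..<b] = []" by simp
  have "Zprod N a b = 1\<^sub>m (2^N)" unfolding Zprod_def e by simp
  also have "\<dots> = tensor N (\<lambda>q. pm PI)" by (simp add: tensor_one)
  also have "\<dots> = tensor N (\<lambda>q. pm (if a \<le> q \<and> q < b then PZ else PI))"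
    using 0 by (intro tensor_cong) auto
  finally show ?case .
next
  case (Suc d)
  hence ab: "a < b" by simp
  hence "[a..<b] = a # [Suc a..<b]" by (simp add: upt_conv_Cons)
  hence "Zprod N a b = Zq N a * Zprod N (Suc a) b" by (simp add: Zprod_def)
  also have "Zprod N (Suc a) b = tensor N (\<lambda>q. pm (if Suc a \<le> q \<and> q < b then PZ else PI))"
    using Suc by simp
  also have "Zq N a = tensor N (\<lambda>q. pm (if q = a then PZ else PI))"
    unfolding Zq_def using Suc ab by (subst op_at_pm[symmetric]) auto
  also have "tensor N (\<lambda>q. pm (if q = a then PZ else PI)) * tensor N (\<lambda>q. pm (if Suc a \<le> q \<and> q < b then PZ else PI))
     = tensor N (\<lambda>q. pm (if q = a then PZ else PI) * pm (if Suc a \<le> q \<and> q < b then PZ else PI))"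
    by (rule tensor_mult) auto
  also have "\<dots> = tensor N (\<lambda>q. pm (if a \<le> q \<and> q < b then PZ else PI))"
    using ab by (intro tensor_cong) (auto simp: pm_I_left pm_I_right simp del: pm.simps)
  finally show ?case .
qed

lemma Xq_tensor: "1 \<le> j \<Longrightarrow> j \<le> N \<Longrightarrow> Xq N j = tensor N (\<lambda>q. pm (if q = j then PX else PI))"
  unfolding Xq_def by (subst op_at_pm[symmetric]) auto
lemma Yq_tensor: "1 \<le> j \<Longrightarrow> j \<le> N \<Longrightarrow> Yq N j = tensor N (\<lambda>q. pm (if q = j then PY else PI))"
  unfolding Yq_def by (subst op_at_pm[symmetric]) auto

lemma tmult: "tensor N (\<lambda>q. pm (F q)) * tensor N (\<lambda>q. pm (G q)) = tensor N (\<lambda>q. pm (F q) * pm (G q))"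
  by (rule tensor_mult) auto

lemma tmult3: "tensor N (\<lambda>q. pm (F q) * pm (G q)) * tensor N (\<lambda>q. pm (H q)) = tensor N (\<lambda>q. pm (F q) * pm (G q) * pm (H q))"
  by (rule tensor_mult) (auto intro: mult_carrier_mat[OF pm_carrier pm_carrier])

definition FL :: "nat \<Rightarrow> nat \<Rightarrow> nat \<Rightarrow> nat \<Rightarrow> pl" where
  "FL n k a q = (if k \<noteq> n then
     (if a < k then (if q = a \<or> q = k then PY else if a < q \<and> q < k then PZ else PI)
      else if a = k then (if q = k then PZ else PI)
      else (if q = k then PX else if k < q \<and> q < a then PZ else if q = a then PX else PI))
   else (if q < a then PZ else if q = a then PX else PI))"

definition sgnW :: "nat \<Rightarrow> nat \<Rightarrow> nat \<Rightarrow> complex" where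
  "sgnW n k a = (if k = n \<and> a < n then -1 else 1)"

lemma uminus_smult: "- (A :: complex mat) = (-1) \<cdot>\<^sub>m A"
  by (rule eq_matI) auto

lemma W_tensor:
  assumes "2 \<le> n" "1 \<le> k" "k \<le> n" "1 \<le> a" "a \<le> n"
  shows "W n k a = sgnW n k a \<cdot>\<^sub>m tensor (n - 1) (\<lambda>q. pm (FL n k a q))"
proof -
  define N where "N = n - 1"
  have nN: "n = Suc N" using assms N_def by simp
  show ?thesis
  proof (cases "k = n")
    case kn: True
    show ?thesis
    proof (cases "a < n")
      case True
      have "W n k a = - (Zprod N 1 a * Xq N a)" using kn True unfolding W_def N_def Let_def by simp
      also have "\<dots> = (-1) \<cdot>\<^sub>m tensor N (\<lambda>q. pm (if 1 \<le> q \<and> q < a then PZ else PI) * pm (if q = a then PX else PI))"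
        using True assms nN by (simp add: Zprod_tensor Xq_tensor tmult uminus_smult del: pm.simps)
      also have "tensor N (\<lambda>q. pm (if 1 \<le> q \<and> q < a then PZ else PI) * pm (if q = a then PX else PI))
          = tensor N (\<lambda>q. pm (FL n k a q))"
        by (intro tensor_cong) (auto simp: FL_def kn pm_I_left pm_I_right simp del: pm.simps)
      finally show ?thesis using kn True by (simp add: sgnW_def N_def)
    next
      case False
      hence an: "a = n" using assms by simp
      have "W n k a = Zprod N 1 n" using kn an unfolding W_def N_def Let_def by simp
      also have "\<dots> = tensor N (\<lambda>q. pm (FL n k a q))"
        using assms nN an kn by (simp add: Zprod_tensor del: pm.simps) (intro tensor_cong, auto simp: FL_def)
      finally show ?thesis using kn an by (simp add: sgnW_def N_def one_smult_mat')
    qed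
  next
    case kn: False
    have kN: "k \<le> N" using kn assms nN by simp
    have s: "sgnW n k a = 1" using kn by (simp add: sgnW_def)
    consider "a < k" | "a = k" | "k < a" "a < n" | "a = n" using assms by linarith
    thus ?thesis
    proof cases
      case 1
      have "W n k a = Yq N a * Zprod N (a + 1) k * Yq N k" using kn 1 unfolding W_def N_def Let_def by simp
      also have "\<dots> = tensor N (\<lambda>q. pm (if q = a then PY else PI) * pm (if Suc a \<le> q \<and> q < k then PZ else PI)
                  * pm (if q = k then PY else PI))"
        using 1 assms kN by (simp add: Zprod_tensor Yq_tensor tmult tmult3 del: pm.simps)
      also have "\<dots> = tensor N (\<lambda>q. pm (FL n k a q))"
        using 1 kn by (intro tensor_cong) (auto simp: FL_def pm_I_left pm_I_right simp del: pm.simps)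
      finally show ?thesis by (simp add: s one_smult_mat' N_def)
    next
      case 2
      have "W n k a = Zq N k" using kn 2 unfolding W_def N_def Let_def by simp
      also have "\<dots> = tensor N (\<lambda>q. pm (if q = k then PZ else PI))"
        unfolding Zq_def using assms kN by (subst op_at_pm[symmetric]) auto
      also have "\<dots> = tensor N (\<lambda>q. pm (FL n k a q))"
        using 2 kn by (intro tensor_cong) (auto simp: FL_def simp del: pm.simps)
      finally show ?thesis by (simp add: s one_smult_mat' N_def)
    next
      case 3
      have "W n k a = Xq N k * Zprod N (k + 1) a * Xq N a" using kn 3 unfolding W_def N_def Let_def by simp
      also have "\<dots> = tensor N (\<lambda>q. pm (if q = k then PX else PI) * pm (if Suc k \<le> q \<and> q < a then PZ else PI)
                  * pm (if q = a then PX else PI))"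
        using 3 assms kN nN by (simp add: Zprod_tensor Xq_tensor tmult tmult3 del: pm.simps)
      also have "\<dots> = tensor N (\<lambda>q. pm (FL n k a q))"
        using 3 kn by (intro tensor_cong) (auto simp: FL_def pm_I_left pm_I_right simp del: pm.simps)
      finally show ?thesis by (simp add: s one_smult_mat' N_def)
    next
      case 4
      have "W n k a = Xq N k * Zprod N (k + 1) n" using kn 4 assms unfolding W_def N_def Let_def by simp
      also have "\<dots> = tensor N (\<lambda>q. pm (if q = k then PX else PI) * pm (if Suc k \<le> q \<and> q < n then PZ else PI))"
        using 4 assms kN nN by (simp add: Zprod_tensor Xq_tensor tmult tmult3 del: pm.simps)
      also have "\<dots> = tensor N (\<lambda>q. pm (FL n k a q))"
        using 4 kn nN by (intro tensor_cong) (auto simp: FL_def pm_I_left pm_I_right simp del: pm.simps)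
      finally show ?thesis by (simp add: s one_smult_mat' N_def)
    qed
  qed
qed

lemma dagger_carrier[simp]: "A \<in> carrier_mat r c \<Longrightarrow> dagger A \<in> carrier_mat c r"
  unfolding dagger_def by auto

lemma dagger_mult: assumes "A \<in> carrier_mat r m" "B \<in> carrier_mat m c"
  shows "dagger (A * B) = dagger B * dagger A"
  using assms by (intro eq_matI) (auto simp: dagger_def scalar_prod_def mult.commute intro!: sum.cong)

lemma dagger_smult: "dagger (x \<cdot>\<^sub>m A) = cnj x \<cdot>\<^sub>m dagger A"
  by (rule eq_matI) (auto simp: dagger_def)

lemma dagger_add: "A \<in> carrier_mat r c \<Longrightarrow> B \<in> carrier_mat r c \<Longrightarrow> dagger (A + B) = dagger A + dagger B"
  by (rule eq_matI) (auto simp: dagger_def)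

lemma dagger_one: "dagger (1\<^sub>m D) = 1\<^sub>m D"
  by (rule eq_matI) (auto simp: dagger_def)

lemma exp_sums: "(\<lambda>t. c ^ t / of_nat (fact t)) sums exp (c::complex)"
proof -
  have "(\<lambda>t. c ^ t /\<^sub>R fact t) sums exp c" by (rule exp_converges)
  moreover have "(\<lambda>t. c ^ t /\<^sub>R fact t) = (\<lambda>t. c ^ t / of_nat (fact t))"
    by (rule ext) (simp add: scaleR_conv_of_real divide_inverse mult.commute)
  ultimately show ?thesis by simp
qed

lemma smult_smult_mat2: "a \<cdot>\<^sub>m (b \<cdot>\<^sub>m A) = (a * b :: complex) \<cdot>\<^sub>m A"
  by (rule eq_matI) auto

lemma smult_mult_smult: "A \<in> carrier_mat r m \<Longrightarrow> B \<in> carrier_mat m c \<Longrightarrow>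
   (a \<cdot>\<^sub>m A) * (b \<cdot>\<^sub>m B) = (a * b :: complex) \<cdot>\<^sub>m (A * B)"
  by (rule eq_matI) (auto simp: scalar_prod_def sum_distrib_left ac_simps intro!: sum.cong)

lemma one_smult_mat2[simp]: "(1::complex) \<cdot>\<^sub>m A = A"
  by (rule eq_matI) auto

lemma pow_invol: fixes G :: "complex mat" assumes G: "G \<in> carrier_mat D D" and GG: "G * G = 1\<^sub>m D"
  shows "(x \<cdot>\<^sub>m G) ^\<^sub>m t = x ^ t \<cdot>\<^sub>m (if even t then 1\<^sub>m D else G)"
proof (induction t)
  case 0 show ?case using G by (auto intro!: eq_matI)
next
  case (Suc t)
  have "(x \<cdot>\<^sub>m G) ^\<^sub>m Suc t = (x ^ t \<cdot>\<^sub>m (if even t then 1\<^sub>m D else G)) * (x \<cdot>\<^sub>m G)"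
    using Suc by simp
  also have "\<dots> = (x ^ t * x) \<cdot>\<^sub>m ((if even t then 1\<^sub>m D else G) * G)"
    using G by (cases "even t") (simp_all add: smult_mult_smult[OF one_carrier_mat[of D] G] smult_mult_smult[OF G G])
  also have "(if even t then 1\<^sub>m D else G) * G = (if even (Suc t) then 1\<^sub>m D else G)"
    using G GG by auto
  finally show ?case by (simp add: mult.commute)
qed


lemma mexp_invol: assumes G: "G \<in> carrier_mat D D" and GG: "G * G = 1\<^sub>m D"
  shows "mexp (x \<cdot>\<^sub>m G) = ((exp x + exp (-x)) / 2) \<cdot>\<^sub>m 1\<^sub>m D + ((exp x - exp (-x)) / 2) \<cdot>\<^sub>m G"
proof (rule eq_matI)
  fix i j assume ij: "i < dim_row (((exp x + exp (-x)) / 2) \<cdot>\<^sub>m 1\<^sub>m D + ((exp x - exp (-x)) / 2) \<cdot>\<^sub>m G)"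
    "j < dim_col (((exp x + exp (-x)) / 2) \<cdot>\<^sub>m 1\<^sub>m D + ((exp x - exp (-x)) / 2) \<cdot>\<^sub>m G)"
  hence i: "i < D" and j: "j < D" using G by auto
  define d where "d = (1\<^sub>m D :: complex mat) $$ (i,j)"
  define g where "g = G $$ (i,j)"
  have trm: "((x \<cdot>\<^sub>m G) ^\<^sub>m t) $$ (i,j) / of_nat (fact t) =
      ((d + g)/2) * (x ^ t / of_nat (fact t)) + ((d - g)/2) * ((-x) ^ t / of_nat (fact t))" for t
  proof (cases "even t")
    case True
    thus ?thesis using i j G by (simp add: pow_invol[OF G GG] d_def field_simps)
  next
    case False
    thus ?thesis using i j G by (simp add: pow_invol[OF G GG] g_def field_simps)
  qed
  have "(\<lambda>t. ((x \<cdot>\<^sub>m G) ^\<^sub>m t) $$ (i,j) / of_nat (fact t)) sums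
     (((d + g)/2) * exp x + ((d - g)/2) * exp (-x))"
    unfolding trm by (intro sums_add sums_mult exp_sums)
  hence "mexp (x \<cdot>\<^sub>m G) $$ (i,j) = ((d + g)/2) * exp x + ((d - g)/2) * exp (-x)"
    unfolding mexp_def using i j G by (auto dest: sums_unique)
  also have "\<dots> = (((exp x + exp (-x)) / 2) \<cdot>\<^sub>m 1\<^sub>m D + ((exp x - exp (-x)) / 2) \<cdot>\<^sub>m G) $$ (i,j)"
    using i j G by (simp add: d_def g_def field_simps)
  finally show "mexp (x \<cdot>\<^sub>m G) $$ (i,j) = (((exp x + exp (-x)) / 2) \<cdot>\<^sub>m 1\<^sub>m D + ((exp x - exp (-x)) / 2) \<cdot>\<^sub>m G) $$ (i,j)" .
qed (use G in \<open>auto simp: mexp_def\<close>)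


definition PP :: "nat \<Rightarrow> complex mat \<Rightarrow> complex \<Rightarrow> complex \<Rightarrow> complex mat" where
  "PP D G x y = x \<cdot>\<^sub>m 1\<^sub>m D + y \<cdot>\<^sub>m G"

lemma PP_carrier: "G \<in> carrier_mat D D \<Longrightarrow> PP D G x y \<in> carrier_mat D D"
  unfolding PP_def by auto

lemma PP_mult: assumes G: "G \<in> carrier_mat D D" and GG: "G * G = 1\<^sub>m D"
  shows "PP D G x y * PP D G u v = PP D G (x*u + y*v) (x*v + y*u)"
proof -
  have "PP D G x y * PP D G u v = (x \<cdot>\<^sub>m 1\<^sub>m D) * (u \<cdot>\<^sub>m 1\<^sub>m D + v \<cdot>\<^sub>m G) + (y \<cdot>\<^sub>m G) * (u \<cdot>\<^sub>m 1\<^sub>m D + v \<cdot>\<^sub>m G)"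
    unfolding PP_def using G by (intro add_mult_distrib_mat[of _ D D]) auto
  also have "\<dots> = ((x \<cdot>\<^sub>m 1\<^sub>m D) * (u \<cdot>\<^sub>m 1\<^sub>m D) + (x \<cdot>\<^sub>m 1\<^sub>m D) * (v \<cdot>\<^sub>m G))
     + ((y \<cdot>\<^sub>m G) * (u \<cdot>\<^sub>m 1\<^sub>m D) + (y \<cdot>\<^sub>m G) * (v \<cdot>\<^sub>m G))"
    using G by (subst (1 2) mult_add_distrib_mat[of _ D D]) auto
  also have "\<dots> = ((x*u) \<cdot>\<^sub>m 1\<^sub>m D + (x*v) \<cdot>\<^sub>m G) + ((y*u) \<cdot>\<^sub>m G + (y*v) \<cdot>\<^sub>m 1\<^sub>m D)"
    using G GG by (simp add: smult_mult_smult[OF one_carrier_mat[of D] one_carrier_mat[of D]]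
      smult_mult_smult[OF one_carrier_mat[of D] G] smult_mult_smult[OF G one_carrier_mat[of D]] smult_mult_smult[OF G G])
  also have "\<dots> = PP D G (x*u + y*v) (x*v + y*u)"
    unfolding PP_def using G by (intro eq_matI) (auto simp: algebra_simps)
  finally show ?thesis .
qed

lemma PP_comm: assumes G: "G \<in> carrier_mat D D" and C: "C \<in> carrier_mat D D" and CG: "C * G = G * C"
  shows "C * PP D G x y = PP D G x y * C"
proof -
  have "C * PP D G x y = C * (x \<cdot>\<^sub>m 1\<^sub>m D) + C * (y \<cdot>\<^sub>m G)"
    unfolding PP_def using G C by (intro mult_add_distrib_mat[of _ D D]) auto
  also have "\<dots> = x \<cdot>\<^sub>m C + y \<cdot>\<^sub>m (C * G)"
    using G C by (simp add: mult_smult_distrib[OF C one_carrier_mat] mult_smult_distrib[OF C G])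
  also have "\<dots> = (x \<cdot>\<^sub>m 1\<^sub>m D) * C + (y \<cdot>\<^sub>m G) * C"
    using G C CG by (simp add: mult_smult_assoc_mat[OF _ C] mult_smult_assoc_mat[OF one_carrier_mat C])
  also have "\<dots> = PP D G x y * C"
    unfolding PP_def using G C by (intro add_mult_distrib_mat[of _ D D, symmetric]) auto
  finally show ?thesis .
qed

lemma PP_dagger: assumes G: "G \<in> carrier_mat D D" and dG: "dagger G = G"
  shows "dagger (PP D G x y) = PP D G (cnj x) (cnj y)"
  unfolding PP_def using G by (simp add: dagger_add[of _ D D] dagger_smult dagger_one dG)

lemma cnj_exp_imag: "cnj (exp (- \<i> * complex_of_real t / 2)) = exp (- (- \<i> * complex_of_real t / 2))"
proof -
  have e1: "exp (- \<i> * complex_of_real t / 2) = cis (- t / 2)"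
    by (simp add: cis_conv_exp)
  have e2: "exp (- (- \<i> * complex_of_real t / 2)) = cis (t / 2)"
    by (simp add: cis_conv_exp)
  show ?thesis unfolding e1 e2 cis_cnj by simp
qed

lemma conj_abstract:
  fixes A B C :: "complex mat"
  assumes A: "A \<in> carrier_mat D D" and B: "B \<in> carrier_mat D D" and C: "C \<in> carrier_mat D D"
    and AA: "A * A = 1\<^sub>m D" and BB: "B * B = 1\<^sub>m D" and dA: "dagger A = A" and dB: "dagger B = B"
    and AB: "A * B = (-1) \<cdot>\<^sub>m (B * A)" and CA: "C * A = (-1) \<cdot>\<^sub>m (A * C)" and CB: "C * B = (-1) \<cdot>\<^sub>m (B * C)"
  shows "mexp ((- \<i> * complex_of_real \<theta> / 2) \<cdot>\<^sub>m (\<i> \<cdot>\<^sub>m (A * B))) * C *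
         dagger (mexp ((- \<i> * complex_of_real \<theta> / 2) \<cdot>\<^sub>m (\<i> \<cdot>\<^sub>m (A * B)))) = C"
proof -
  define G where "G = \<i> \<cdot>\<^sub>m (A * B)"
  define c where "c = - \<i> * complex_of_real \<theta> / 2"
  have G: "G \<in> carrier_mat D D" unfolding G_def using A B by auto
  have cs: "A * B \<in> carrier_mat D D" "B * A \<in> carrier_mat D D" "A * C \<in> carrier_mat D D" "C * A \<in> carrier_mat D D"
    "B * C \<in> carrier_mat D D" "C * B \<in> carrier_mat D D" "A * A \<in> carrier_mat D D" "B * B \<in> carrier_mat D D"
    using A B C by auto
  have BA: "B * A = (-1) \<cdot>\<^sub>m (A * B)"
    using AB A B by (simp add: smult_smult_mat2)
  have BC: "B * C = (-1) \<cdot>\<^sub>m (C * B)"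
    using CB C B by (simp add: smult_smult_mat2)
  have "(A * B) * (A * B) = A * ((B * A) * B)"
    using assoc_mult_mat[OF A B cs(1)] assoc_mult_mat[OF B A B] by simp
  also have "\<dots> = (-1) \<cdot>\<^sub>m (A * (A * (B * B)))"
    unfolding BA using A B cs by (simp add: mult_smult_assoc_mat[of _ D D _ D] mult_smult_distrib[of _ D D _ D])
  also have "A * (A * (B * B)) = 1\<^sub>m D"
    using A by (simp add: BB AA)
  finally have ABAB: "(A * B) * (A * B) = (-1) \<cdot>\<^sub>m 1\<^sub>m D" .
  have GG: "G * G = 1\<^sub>m D"
    unfolding G_def using A B cs by (simp add: smult_mult_smult[of _ D D _ D] ABAB smult_smult_mat2)
  have "(A * B) * C = A * (B * C)" using A B C cs by simp
  also have "\<dots> = (-1) \<cdot>\<^sub>m ((A * C) * B)"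
    unfolding BC using A B C cs by (simp add: mult_smult_distrib[of _ D D _ D])
  also have "\<dots> = (C * A) * B"
    by (simp only: CA mult_smult_assoc_mat[OF cs(3) B])
  also have "\<dots> = C * (A * B)" by (rule assoc_mult_mat[OF C A B])
  finally have "(A * B) * C = C * (A * B)" .
  hence CG: "C * G = G * C"
    unfolding G_def using A B C cs by (simp add: mult_smult_distrib[of _ D D _ D] mult_smult_assoc_mat[of _ D D _ D])
  have dG: "dagger G = G"
    unfolding G_def using A B cs by (simp add: dagger_smult dagger_mult[of _ D D] dA dB BA smult_smult_mat2)
  define e where "e = exp c"
  define e' where "e' = exp (- c)"
  have ce1: "cnj e = e'" unfolding e_def e'_def c_def by (rule cnj_exp_imag)
  have ce: "cnj e = e'" "cnj e' = e" using ce1 by (auto simp flip: ce1)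
  have ee: "e * e' = 1" unfolding e_def e'_def by (simp add: exp_minus_inverse)
  have R: "mexp (c \<cdot>\<^sub>m G) = PP D G ((e + e')/2) ((e - e')/2)"
    unfolding PP_def e_def e'_def by (rule mexp_invol[OF G GG])
  have Rd: "dagger (mexp (c \<cdot>\<^sub>m G)) = PP D G ((e + e')/2) ((e' - e)/2)"
    unfolding R using G dG by (simp add: PP_dagger ce add.commute)
  have "mexp (c \<cdot>\<^sub>m G) * C * dagger (mexp (c \<cdot>\<^sub>m G)) = C * (PP D G ((e + e')/2) ((e - e')/2) * PP D G ((e + e')/2) ((e' - e)/2))"
    unfolding Rd unfolding R
    by (simp only: PP_comm[OF G C CG, symmetric] assoc_mult_mat[OF C PP_carrier[OF G] PP_carrier[OF G]])
  also have "PP D G ((e + e')/2) ((e - e')/2) * PP D G ((e + e')/2) ((e' - e)/2) = PP D G 1 0"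
    unfolding PP_mult[OF G GG] using ee by (simp add: field_simps)
  also have "PP D G 1 0 = 1\<^sub>m D" unfolding PP_def using G by (intro eq_matI) auto
  finally show ?thesis unfolding G_def c_def using C by simp
qed

definition q0 :: "nat \<Rightarrow> nat \<Rightarrow> nat \<Rightarrow> nat \<Rightarrow> nat" where
  "q0 n k a b = (if k = n then a else if b < k then b else if a \<le> k then k else a)"

lemma sg_FL:
  assumes "2 \<le> n" "1 \<le> k" "k \<le> n" "1 \<le> a" "a < b" "b \<le> n" "1 \<le> q" "q \<le> n - 1"
  shows "sg (FL n k a q) (FL n k b q) = (if q = q0 n k a b then -1 else 1)"
  using assms unfolding sg_def FL_def q0_def by (auto split: if_splits)


lemma prod_sg_FL:
  assumes "2 \<le> n" "1 \<le> k" "k \<le> n" "1 \<le> a" "a < b" "b \<le> n"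
  shows "(\<Prod>q\<in>{1..n-1}. sg (FL n k a q) (FL n k b q)) = -1"
proof -
  have r: "q0 n k a b \<in> {1..n-1}" using assms unfolding q0_def by auto
  have "(\<Prod>q\<in>{1..n-1}. sg (FL n k a q) (FL n k b q)) = (\<Prod>q\<in>{1..n-1}. if q = q0 n k a b then -1 else 1)"
    using assms by (intro prod.cong refl) (auto simp: sg_FL)
  also have "\<dots> = -1" using r by (subst prod.delta) auto
  finally show ?thesis .
qed

context
  fixes n k :: nat
  assumes n: "2 \<le> n" and k: "1 \<le> k" "k \<le> n"
begin

lemma W_carrier: "1 \<le> a \<Longrightarrow> a \<le> n \<Longrightarrow> W n k a \<in> carrier_mat (2^(n-1)) (2^(n-1))"
  using n k by (simp add: W_tensor)

lemma sgnW_sq: "sgnW n k a * sgnW n k a = 1" by (simp add: sgnW_def)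

lemma W_sq: "1 \<le> a \<Longrightarrow> a \<le> n \<Longrightarrow> W n k a * W n k a = 1\<^sub>m (2^(n-1))"
  using n k by (simp add: W_tensor smult_mult_smult[OF tensor_pm_carrier tensor_pm_carrier] tensor_pm_sq sgnW_sq)

lemma W_dag: "1 \<le> a \<Longrightarrow> a \<le> n \<Longrightarrow> dagger (W n k a) = W n k a"
  using n k by (simp add: W_tensor dagger_smult tensor_pm_dagger sgnW_def)

lemma W_anti_lt: assumes "1 \<le> a" "a < b" "b \<le> n"
  shows "W n k a * W n k b = (-1) \<cdot>\<^sub>m (W n k b * W n k a)"
proof -
  have t: "tensor (n-1) (\<lambda>q. pm (FL n k a q)) * tensor (n-1) (\<lambda>q. pm (FL n k b q)) =
     (-1) \<cdot>\<^sub>m (tensor (n-1) (\<lambda>q. pm (FL n k b q)) * tensor (n-1) (\<lambda>q. pm (FL n k a q)))"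
    using tensor_pm_comm[of "n-1" "FL n k a" "FL n k b"] prod_sg_FL[OF n k assms] by simp
  show ?thesis
    using n k assms
    by (simp only: W_tensor smult_mult_smult[OF tensor_pm_carrier tensor_pm_carrier] t smult_smult_mat2)
      (simp add: mult.commute)
qed

lemma W_anti: "1 \<le> a \<Longrightarrow> a \<le> n \<Longrightarrow> 1 \<le> b \<Longrightarrow> b \<le> n \<Longrightarrow> a \<noteq> b \<Longrightarrow>
   W n k a * W n k b = (-1) \<cdot>\<^sub>m (W n k b * W n k a)"
proof (cases "a < b")
  case True
  assume "1 \<le> a" "b \<le> n" thus ?thesis using True W_anti_lt by simp
next
  case False
  assume "1 \<le> b" "a \<le> n" "a \<noteq> b"
  hence "b < a" using False by simp
  hence "W n k b * W n k a = (-1) \<cdot>\<^sub>m (W n k a * W n k b)" using W_anti_lt \<open>1 \<le> b\<close> \<open>a \<le> n\<close> by simp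
  thus ?thesis by (simp add: smult_smult_mat2)
qed

end

theorem lemma5:
  fixes n k :: nat and \<theta> :: real
  assumes "n \<ge> 2" and "1 \<le> k" and "k \<le> n"
  shows "(\<forall>m j. 1 \<le> m \<and> m < k \<and> m + 1 < j \<and> j \<le> n \<longrightarrow>
            Rot n k \<theta> m * W n k j * dagger (Rot n k \<theta> m) = W n k j)
       \<and> (\<forall>m j. k \<le> m \<and> m < n \<and> 1 \<le> j \<and> j < k \<longrightarrow>
            Rot n k \<theta> m * W n k j * dagger (Rot n k \<theta> m) = W n k j)"
proof (intro conjI allI impI)
  fix m j assume h: "1 \<le> m \<and> m < k \<and> m + 1 < j \<and> j \<le> n"
  have g: "Gen n k m = \<i> \<cdot>\<^sub>m (W n k (m + 1) * W n k m)" using h by (simp add: Gen_def)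
  show "Rot n k \<theta> m * W n k j * dagger (Rot n k \<theta> m) = W n k j"
    unfolding Rot_def g
    by (rule conj_abstract) (use h assms in \<open>auto intro: W_carrier W_sq W_dag W_anti\<close>)
next
  fix m j assume h: "k \<le> m \<and> m < n \<and> 1 \<le> j \<and> j < k"
  have g: "Gen n k m = \<i> \<cdot>\<^sub>m (W n k m * W n k (m + 1))" using h by (simp add: Gen_def)
  show "Rot n k \<theta> m * W n k j * dagger (Rot n k \<theta> m) = W n k j"
    unfolding Rot_def g
    by (rule conj_abstract) (use h assms in \<open>auto intro: W_carrier W_sq W_dag W_anti\<close>)
qed

end
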